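(* Let $x,y$ be non-commuting indeterminates and $C=xyx^{-1}y^{-1}$. Let $(R_n)_{n\in\mathbb Z}$ satisfy $$R_{2n}CR_{2n-2}=1+R_{2n-1},\qquad R_{2n+1}CR_{2n-1}=1+R_{2n}^4\qquad(n\in\mathbb Z),$$ with $R_0=yxy^{-1}$ and $R_1=y$. Set $u_n=R_{2n}$. Then $$K_n:=\big((Cu_n)^2+u_{n+1}^2\big)\big(u_{n+1}Cu_n-1\big)^{-1}$$ is independent of $n$.
   Context: Work in the free skew field (non-commutative rational functions) over $\mathbb C$ generated by $x,y$. The two displayed relations are the $(1,4)$-system. They determine $R_n$ for all $n\in\mathbb Z$ from $R_0,R_1$. Note that $u_{n+1}Cu_n-1=R_{2n+1}$. *)

theory Defs
  imports Main
begin

definition commutator_C :: "'a::division_ring \<Rightarrow> 'a \<Rightarrow> 'a" where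
  "commutator_C x y = x * y * inverse x * inverse y"

end

theory Submission imports Defs begin

lemma step_equiv:
  fixes P N Q C F :: "'a::division_ring"
  assumes nP: "P \<noteq> 0" and nN: "N \<noteq> 0" and nC: "C \<noteq> 0" and nF: "F \<noteq> 0"
    and rec: "Q*C*P = F" and com: "F*N = N*F"
  shows "(N*C*P = P*N) = (Q*C*N = N*Q)"
proof -
  have Qd: "Q = F * inverse P * inverse C"
    unfolding rec[symmetric] using nP nC by (simp add: mult.assoc)
  have e1: "Q*C*N = F*(inverse P*N)" using Qd nC by (simp add: mult.assoc)
  have "N*Q = (N*F)*(inverse P*inverse C)" by (simp add: Qd mult.assoc)
  also have "\<dots> = (F*N)*(inverse P*inverse C)" using com by simp
  finally have e2: "N*Q = F*(N*inverse P*inverse C)" by (simp add: mult.assoc)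
  have "(Q*C*N = N*Q) = (inverse P*N = N*inverse P*inverse C)"
    using e1 e2 nF by simp
  also have "\<dots> = (P*(inverse P*N) = P*(N*inverse P*inverse C))"
    using nP by (simp only: mult_cancel_left) simp
  also have "\<dots> = (N = P*N*inverse P*inverse C)" using nP by (simp add: mult.assoc[symmetric] del: mult_cancel_left mult_cancel_right)
  also have "\<dots> = (N*C = P*N*inverse P*inverse C*C)" using nC by (simp only: mult_cancel_right) simp
  also have "\<dots> = (N*C = P*N*inverse P)" using nC by (simp add: mult.assoc del: mult_cancel_left mult_cancel_right)
  also have "\<dots> = (N*C*P = P*N*inverse P*P)" using nP by (simp only: mult_cancel_right) simp
  also have "\<dots> = (N*C*P = P*N)" using nP by (simp add: mult.assoc del: mult_cancel_left mult_cancel_right)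
  finally show ?thesis by simp
qed

lemma inv_canc:
  fixes x z :: "'a::division_ring"
  assumes "x \<noteq> 0"
  shows "inverse x * (x * z) = z" "x * (inverse x * z) = z"
  using assms by (simp_all add: mult.assoc[symmetric])

lemma Kform:
  fixes a w b C :: "'a::division_ring"
  assumes na: "a \<noteq> 0" and nw: "w \<noteq> 0" and nb: "b \<noteq> 0" and nC: "C \<noteq> 0"
    and h1: "w*C*a = a*w" and h3: "b*C*a = 1 + w"
  shows "((C*a)^2 + b^2) * inverse (b*C*a - 1) =
     inverse b*w*inverse b + inverse b*w*inverse b*inverse w + inverse b*inverse b
     + inverse b*inverse b*inverse w + b*b*inverse w"
proof -
  have d: "b*C*a - 1 = w" using h3 by simp
  have Ca: "C*a = inverse w*a*w"
  proof -
    have "C*a = inverse w*(w*C*a)" using nw by (simp add: mult.assoc inv_canc)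
    then show ?thesis using h1 by (simp add: mult.assoc)
  qed
  have "a = w*inverse b*(b*(C*a))*inverse w"
    using nw nb by (simp add: Ca mult.assoc inv_canc)
  also have "\<dots> = w*inverse b*(1+w)*inverse w" using h3 by (simp add: mult.assoc)
  also have "\<dots> = w*inverse b*inverse w + w*inverse b"
    using nw by (simp add: algebra_simps inv_canc)
  finally have ad: "a = w*inverse b*inverse w + w*inverse b" .
  have "((C*a)^2 + b^2) * inverse (b*C*a - 1) = (inverse w*a*w*(inverse w*a*w) + b*b)*inverse w"
    by (simp add: d Ca power2_eq_square)
  also have "\<dots> = inverse w*a*a + b*b*inverse w"
    using nw by (simp add: algebra_simps inv_canc)
  also have "\<dots> = inverse w*(w*inverse b*inverse w + w*inverse b)*(w*inverse b*inverse w + w*inverse b) + b*b*inverse w"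
    using ad by simp
  also have "\<dots> = inverse b*w*inverse b + inverse b*w*inverse b*inverse w + inverse b*inverse b
     + inverse b*inverse b*inverse w + b*b*inverse w"
    using nw nb by (simp add: algebra_simps inv_canc)
  finally show ?thesis .
qed

lemma Knext:
  fixes w b W b2 C :: "'a::division_ring"
  assumes nw: "w \<noteq> 0" and nb: "b \<noteq> 0" and nW: "W \<noteq> 0" and nC: "C \<noteq> 0"
    and h2: "b*C*w = w*b" and h4: "W*C*w = 1 + b^4" and h5: "W*C*b = b*W" and h7: "b2*C*b = 1 + W"
  shows "((C*b)^2 + b2^2) * inverse (b2*C*b - 1) =
     inverse b*w*inverse b + inverse b*w*inverse b*inverse w + inverse b*inverse b
     + inverse b*inverse b*inverse w + b*b*inverse w"
proof -
  define t where "t = 1 + b*b*b*b"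
  have h4': "W*(C*w) = t" using h4 by (simp add: t_def power4_eq_xxxx mult.assoc)
  have d: "b2*C*b - 1 = W" using h7 by simp
  have Cw: "C*w = inverse b*w*b"
  proof -
    have "C*w = inverse b*(b*C*w)" using nb by (simp add: mult.assoc inv_canc)
    then show ?thesis using h2 by (simp add: mult.assoc)
  qed
  have Cb: "C*b = inverse W*b*W"
  proof -
    have "C*b = inverse W*(W*C*b)" using nW by (simp add: mult.assoc inv_canc)
    then show ?thesis using h5 by (simp add: mult.assoc)
  qed
  have iWt: "inverse W * t = inverse b*w*b"
    using nW by (simp add: h4'[symmetric] Cw inv_canc)
  have Wd: "W = t*inverse b*inverse w*b"
  proof -
    have Cwn: "C*w \<noteq> 0" using nC nw by simp
    have "W = W*(C*w)*inverse (C*w)" by (simp only: mult.assoc[of W "C*w" "inverse (C*w)"] right_inverse[OF Cwn] mult_1_right)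
    also have "\<dots> = t * inverse (inverse b*w*b)" using h4' Cw by simp
    also have "\<dots> = t*inverse b*inverse w*b" using nw nb
      by (simp add: nonzero_inverse_mult_distrib mult.assoc)
    finally show ?thesis .
  qed
  have Wib: "W*inverse b = t*inverse b*inverse w"
    using nb by (simp add: Wd mult.assoc)
  have tib: "inverse b*t = t*inverse b"
    using nb by (simp add: t_def distrib_left distrib_right inv_canc mult.assoc)
  have tib': "\<And>z. inverse b*(t*z) = t*(inverse b*z)"
    by (simp add: mult.assoc[symmetric] tib)
  have b2d: "b2 = (inverse W + 1)*inverse b*W"
  proof -
    have "b2 = b2*(C*b)*inverse W*inverse b*W"
      using nW nb by (simp add: Cb mult.assoc inv_canc)
    also have "\<dots> = (1+W)*inverse W*inverse b*W" using h7 by (simp add: mult.assoc)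
    also have "\<dots> = (inverse W + 1)*inverse b*W" using nW by (simp add: algebra_simps)
    finally show ?thesis .
  qed
  have "((C*b)^2 + b2^2) * inverse (b2*C*b - 1)
      = (inverse W*b*W*(inverse W*b*W) + b2*b2)*inverse W"
    by (simp add: d Cb power2_eq_square)
  also have "\<dots> = inverse W*b*b + b2*b2*inverse W"
    using nW by (simp add: algebra_simps inv_canc)
  also have "\<dots> = inverse W*b*b + (inverse W + 1)*inverse b*W*((inverse W + 1)*inverse b*W)*inverse W"
    using b2d by simp
  also have "\<dots> = inverse W*(b*b + inverse b*inverse b) + inverse W*inverse b*(W*inverse b) + inverse b*inverse b + inverse b*(W*inverse b)"
    using nW by (simp add: algebra_simps inv_canc)
  also have "b*b + inverse b*inverse b = t*inverse b*inverse b"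
    using nb by (simp add: t_def algebra_simps inv_canc)
  also have "inverse W*(t*inverse b*inverse b) = inverse b*w*inverse b"
    using nb by (simp add: mult.assoc[symmetric] iWt) (simp add: mult.assoc inv_canc)
  also have "inverse W*inverse b*(W*inverse b) = inverse b*w*inverse b*inverse w"
  proof -
    have "inverse W*inverse b*(W*inverse b) = (inverse W*(inverse b*t))*inverse b*inverse w"
      by (simp add: Wib mult.assoc)
    also have "\<dots> = (inverse W*t)*inverse b*inverse b*inverse w" by (simp add: tib' mult.assoc)
    also have "\<dots> = inverse b*w*inverse b*inverse w" using nb by (simp add: iWt mult.assoc inv_canc)
    finally show ?thesis .
  qed
  also have "inverse b*(W*inverse b) = inverse b*inverse b*inverse w + b*b*inverse w"
  proof -
    have "inverse b*(W*inverse b) = (inverse b*t)*inverse b*inverse w" by (simp add: Wib mult.assoc)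
    also have "\<dots> = t*inverse b*inverse b*inverse w" by (simp add: tib' mult.assoc)
    also have "\<dots> = inverse b*inverse b*inverse w + b*b*inverse w"
      using nb by (simp add: t_def algebra_simps inv_canc)
    finally show ?thesis .
  qed
  finally show ?thesis by (simp add: algebra_simps)
qed


theorem lemma4p1:
  fixes x y :: "'a::{division_ring, ring_char_0}"
    and R :: "int \<Rightarrow> 'a"
  assumes "x \<noteq> 0" and "y \<noteq> 0"
    and nz: "\<And>k. R k \<noteq> 0"
    and even_rel: "\<And>n. R (2*n) * commutator_C x y * R (2*n - 2) = 1 + R (2*n - 1)"
    and odd_rel: "\<And>n. R (2*n + 1) * commutator_C x y * R (2*n - 1) = 1 + R (2*n) ^ 4"
    and R0: "R 0 = y * x * inverse y"
    and R1: "R 1 = y"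
  shows "\<exists>K. \<forall>n::int.
    ((commutator_C x y * R (2*n))\<^sup>2 + (R (2*(n+1)))\<^sup>2)
      * inverse (R (2*(n+1)) * commutator_C x y * R (2*n) - 1) = K"
proof -
  define C where "C = commutator_C x y"
  have nC: "C \<noteq> 0" using assms(1,2) by (simp add: C_def commutator_C_def)
  have I1: "R 1 * C * R (1-1) = R (1-1) * R 1"
    using assms(1,2) by (simp add: R0 R1 C_def commutator_C_def mult.assoc inv_canc)
  have recF: "\<exists>F. R (k+1) * C * R (k-1) = F \<and> F * R k = R k * F" for k
  proof (cases "even k")
    case True
    then obtain n where k: "k = 2*n" by (auto elim: evenE)
    have "R (k+1) * C * R (k-1) = 1 + R k ^ 4" using odd_rel[of n] by (simp add: k C_def)
    moreover have "(1 + R k ^ 4) * R k = R k * (1 + R k ^ 4)"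
      by (simp add: distrib_left distrib_right power_commutes)
    ultimately show ?thesis by blast
  next
    case False
    then obtain n where k: "k = 2*n+1" by (auto elim: oddE)
    have e: "2*(n+1) = k+1" "k+1-2 = k-1" "k+1-1 = k" by (simp_all add: k)
    have "R (k+1) * C * R (k-1) = 1 + R k" using even_rel[of "n+1"] unfolding e C_def .
    moreover have "(1 + R k) * R k = R k * (1 + R k)"
      by (simp add: distrib_left distrib_right)
    ultimately show ?thesis by blast
  qed
  have equiv: "(R k * C * R (k-1) = R (k-1) * R k) = (R (k+1) * C * R (k+1-1) = R (k+1-1) * R (k+1))" for k
  proof -
    obtain F where F: "R (k+1) * C * R (k-1) = F" "F * R k = R k * F" using recF by blast
    have nF: "F \<noteq> 0" using nz nC F(1)[symmetric] by simp
    show ?thesis using step_equiv[OF nz nz nC nF F] by simp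
  qed
  have Iall: "R k * C * R (k-1) = R (k-1) * R k" for k
  proof (induction k rule: int_induct[where k=1])
    case base then show ?case using I1 by simp
  next
    case (step1 i) then show ?case using equiv[of i] by simp
  next
    case (step2 i) then show ?case using equiv[of "i-1"] by simp
  qed
  define K where "K n = ((C * R (2*n))\<^sup>2 + (R (2*(n+1)))\<^sup>2)
      * inverse (R (2*(n+1)) * C * R (2*n) - 1)" for n
  have Kstep: "K (n+1) = K n" for n
  proof -
    have i1: "2*n+1-1 = 2*n" "2*(n+1)-2 = 2*n" "2*(n+1)-1 = 2*n+1" "2*(n+1)+1-1 = 2*(n+1)"
      "2*(n+1+1)-2 = 2*(n+1)" "2*(n+1+1)-1 = 2*(n+1)+1" by simp_all
    have h1: "R (2*n+1) * C * R (2*n) = R (2*n) * R (2*n+1)"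
      using Iall[of "2*n+1"] unfolding i1 .
    have h3: "R (2*(n+1)) * C * R (2*n) = 1 + R (2*n+1)"
      using even_rel[of "n+1"] unfolding i1 C_def .
    have h2: "R (2*(n+1)) * C * R (2*n+1) = R (2*n+1) * R (2*(n+1))"
      using Iall[of "2*(n+1)"] unfolding i1 .
    have h4: "R (2*(n+1)+1) * C * R (2*n+1) = 1 + R (2*(n+1)) ^ 4"
      using odd_rel[of "n+1"] unfolding i1 C_def .
    have h5: "R (2*(n+1)+1) * C * R (2*(n+1)) = R (2*(n+1)) * R (2*(n+1)+1)"
      using Iall[of "2*(n+1)+1"] unfolding i1 .
    have h7: "R (2*(n+1+1)) * C * R (2*(n+1)) = 1 + R (2*(n+1)+1)"
      using even_rel[of "n+1+1"] unfolding i1 C_def .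
    show ?thesis unfolding K_def
      using Kform[OF nz nz nz nC h1 h3] Knext[OF nz nz nz nC h2 h4 h5 h7] by simp
  qed
  have "K n = K 0" for n
  proof (induction n rule: int_induct[where k=0])
    case base then show ?case by simp
  next
    case (step1 i) then show ?case using Kstep[of i] by simp
  next
    case (step2 i) then show ?case using Kstep[of "i-1"] by simp
  qed
  then show ?thesis unfolding K_def C_def by blast
qed

end
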